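(* Let $A,B,C\in\operatorname{Sym}(n,\mathbb{R})$ be such that $Q_C$ vanishes on $\{Q_A=0\}\cap\{Q_B=0\}$, and let $\mathcal{N}:=\{z\in\mathbb{R}^n:Q_A(z)=Q_B(z)=0,\ Az\wedge Bz\ne0\}$. Then for every $x_0\in\mathcal{N}$ there exist $\alpha(x_0),\beta(x_0)\in\mathbb{R}$ such that $Q_C|_{V_{x_0}}=\alpha(x_0)Q_A|_{V_{x_0}}+\beta(x_0)Q_B|_{V_{x_0}}$ and $Cx_0=\alpha(x_0)Ax_0+\beta(x_0)Bx_0$, where $V_{x_0}:=(\operatorname{span}_{\mathbb{R}}\{Ax_0,Bx_0\})^\perp$. Moreover, locally on $\mathcal{N}$ the numbers $\alpha(x_0),\beta(x_0)$ can be chosen as real-analytic functions of $x_0$.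
   Context: $Q_M(z)={}^tzMz$; $\perp$ is the Euclidean orthogonal complement; $V_{x_0}$ is the tangent space to the analytic submanifold $\mathcal{N}$ at $x_0$. *)

theory Defs
  imports "HOL-Analysis.Analysis"
begin

definition Qf :: "real^'n^'n \<Rightarrow> real^'n \<Rightarrow> real" where
  "Qf M z = z \<bullet> (M *v z)"

definition symmetric_mat :: "real^'n^'n \<Rightarrow> bool" where
  "symmetric_mat M \<longleftrightarrow> transpose M = M"

definition wedge2 :: "real^'n \<Rightarrow> real^'n \<Rightarrow> real^'n^'n" where
  "wedge2 u v = (\<chi> i j. u$i * v$j - u$j * v$i)"

definition calN :: "real^'n^'n \<Rightarrow> real^'n^'n \<Rightarrow> (real^'n) set" where
  "calN A B = {z. Qf A z = 0 \<and> Qf B z = 0 \<and> wedge2 (A *v z) (B *v z) \<noteq> 0}"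

definition Vsp :: "real^'n^'n \<Rightarrow> real^'n^'n \<Rightarrow> real^'n \<Rightarrow> (real^'n) set" where
  "Vsp A B x = orthogonal_comp (span {A *v x, B *v x})"

text \<open>Real-analytic functions on an open set U of R^n: near every point p of U,
  f is the sum of a (multivariate) power series centred at p, indexed by
  multi-indices k :: 'n => nat (unconditional = absolute convergence in R).\<close>
definition real_analytic_on :: "(real^'n \<Rightarrow> real) \<Rightarrow> (real^'n) set \<Rightarrow> bool" where
  "real_analytic_on f U \<longleftrightarrow>
     (\<forall>p\<in>U. \<exists>r>0. \<exists>c :: ('n \<Rightarrow> nat) \<Rightarrow> real.
        \<forall>x\<in>ball p r. ((\<lambda>k. c k * (\<Prod>i\<in>UNIV. (x$i - p$i) ^ k i)) has_sum f x) UNIV)"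

end

theory Submission
  imports Defs
begin


definition mon :: "real^'n \<Rightarrow> ('n \<Rightarrow> nat) \<Rightarrow> real" where
  "mon y k = (\<Prod>i\<in>UNIV. (y$i) ^ (k i))"

definition deg :: "('n::finite \<Rightarrow> nat) \<Rightarrow> nat" where
  "deg k = (\<Sum>i\<in>UNIV. k i)"

definition PS :: "real^'n \<Rightarrow> real \<Rightarrow> (real^'n \<Rightarrow> real) \<Rightarrow> (('n \<Rightarrow> nat) \<Rightarrow> real) \<Rightarrow> bool" where
  "PS p r f c \<longleftrightarrow> 0 < r \<and> (\<lambda>k. \<bar>c k\<bar> * r ^ deg k) summable_on UNIV \<and>
     (\<forall>y. (\<forall>i. \<bar>y$i\<bar> \<le> r) \<longrightarrow> ((\<lambda>k. c k * mon y k) has_sum f (p + y)) UNIV)"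

definition Nrm :: "real \<Rightarrow> (('n::finite \<Rightarrow> nat) \<Rightarrow> real) \<Rightarrow> real" where
  "Nrm r c = (\<Sum>\<^sub>\<infinity>k. \<bar>c k\<bar> * r ^ deg k)"

lemma mon_bound:
  assumes "\<forall>i. \<bar>y$i\<bar> \<le> r"
  shows "\<bar>mon y k\<bar> \<le> r ^ deg k"
proof -
  have "\<bar>mon y k\<bar> = (\<Prod>i\<in>UNIV. \<bar>y$i\<bar> ^ k i)"
    by (simp add: mon_def abs_prod power_abs)
  also have "\<dots> \<le> (\<Prod>i\<in>UNIV. r ^ k i)"
    by (intro prod_mono) (use assms in \<open>auto intro: power_mono\<close>)
  also have "\<dots> = r ^ deg k" by (simp add: deg_def power_sum)
  finally show ?thesis .
qed

lemma mon_add: "mon y (\<lambda>i. k i + l i) = mon y k * mon y l"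
  by (simp add: mon_def power_add prod.distrib)

lemma deg_add: "deg (\<lambda>i. k i + l i) = deg k + deg l"
  by (simp add: deg_def sum.distrib)

lemma mon_zero_idx[simp]: "mon y (\<lambda>_. 0) = 1"
  by (simp add: mon_def)

lemma deg_zero[simp]: "deg (\<lambda>_. 0) = 0"
  by (simp add: deg_def)

lemma mon_at0: "mon 0 k = (if k = (\<lambda>_. 0) then 1 else 0)"
proof (cases "k = (\<lambda>_. 0)")
  case False
  then obtain i where "k i \<noteq> 0" by auto
  then have "(\<Prod>j\<in>UNIV. (0::real) ^ k j) = 0" by (subst prod_zero_iff) auto
  then show ?thesis using False by (simp add: mon_def)
qed simp

lemma deg_pos: "k \<noteq> (\<lambda>_. 0) \<Longrightarrow> deg k \<ge> 1"
proof -
  assume "k \<noteq> (\<lambda>_. 0)"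
  then obtain i where "k i \<noteq> 0" by auto
  then have "k i \<le> deg k" unfolding deg_def by (intro member_le_sum) auto
  with \<open>k i \<noteq> 0\<close> show ?thesis by simp
qed

lemma PS_value0:
  assumes "PS p r f c" shows "f p = c (\<lambda>_. 0)"
proof -
  have "((\<lambda>k. c k * mon 0 k) has_sum f (p + 0)) UNIV"
    using assms unfolding PS_def by (auto dest: spec[where x=0])
  moreover have "((\<lambda>k. c k * mon 0 k) has_sum c (\<lambda>_. 0)) UNIV"
    by (rule has_sum_finite_neutralI[where B = "{\<lambda>_. 0}"]) (auto simp: mon_at0)
  ultimately show ?thesis using has_sum_unique by fastforce
qed

lemma PS_bound:
  assumes "PS p r f c" "\<forall>i. \<bar>y$i\<bar> \<le> r"
  shows "\<bar>f (p + y)\<bar> \<le> Nrm r c"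
proof -
  have h1: "((\<lambda>k. c k * mon y k) has_sum f (p + y)) UNIV" using assms unfolding PS_def by auto
  have h2: "((\<lambda>k. \<bar>c k\<bar> * r ^ deg k) has_sum Nrm r c) UNIV"
    using assms unfolding PS_def Nrm_def by auto
  show ?thesis
    using norm_infsum_le[OF h1 h2] mon_bound[OF assms(2)]
    by (simp add: abs_mult mult_left_mono)
qed

lemma Nrm_nonneg: "Nrm r c \<ge> 0" if "r \<ge> 0"
  unfolding Nrm_def using that by (intro infsum_nonneg) auto

lemma PS_mon_r:
  assumes "PS p r f c" "0 < r'" "r' \<le> r"
  shows "PS p r' f c" and "Nrm r' c \<le> Nrm r c"
proof -
  have s: "(\<lambda>k. \<bar>c k\<bar> * r ^ deg k) summable_on UNIV" using assms unfolding PS_def by auto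
  have le: "\<bar>c k\<bar> * r' ^ deg k \<le> \<bar>c k\<bar> * r ^ deg k" for k
    using assms by (intro mult_left_mono power_mono) auto
  have s': "(\<lambda>k. \<bar>c k\<bar> * r' ^ deg k) summable_on UNIV"
    by (rule summable_on_comparison_test[OF s]) (use le assms in auto)
  show "PS p r' f c" using assms s' unfolding PS_def by (auto intro: order_trans)
  show "Nrm r' c \<le> Nrm r c" unfolding Nrm_def by (intro infsum_mono s s' le)
qed

lemma PS_finite:
  assumes "finite F" "\<And>k. k \<notin> F \<Longrightarrow> c k = 0"
    and "\<And>y. f (p + y) = (\<Sum>k\<in>F. c k * mon y k)" and "0 < r"
  shows "PS p r f c"
  unfolding PS_def
proof (intro conjI allI impI)
  show "(\<lambda>k. \<bar>c k\<bar> * r ^ deg k) summable_on UNIV"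
    by (rule has_sum_imp_summable, rule has_sum_finite_neutralI[where B = F]) (use assms in auto)
  fix y :: "real^'a"
  show "((\<lambda>k. c k * mon y k) has_sum f (p + y)) UNIV"
    by (rule has_sum_finite_neutralI[where B = F]) (use assms in auto)
qed (use assms in auto)

lemma group_has_sum:
  fixes T :: "'i \<Rightarrow> real" and \<mu> :: "'i \<Rightarrow> 'k"
  assumes "(T has_sum S) UNIV"
  shows "((\<lambda>k. \<Sum>\<^sub>\<infinity>i\<in>{i. \<mu> i = k}. T i) has_sum S) UNIV"
proof -
  have bij: "bij_betw (\<lambda>i. (\<mu> i, i)) UNIV (Sigma UNIV (\<lambda>k. {i. \<mu> i = k}))"
    by (auto simp: bij_betw_def inj_on_def image_def)
  have "((\<lambda>i. (T \<circ> snd) (\<mu> i, i)) has_sum S) UNIV" using assms by simp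
  then have "((T \<circ> snd) has_sum S) (Sigma UNIV (\<lambda>k. {i. \<mu> i = k}))"
    using has_sum_reindex_bij_betw[OF bij] by blast
  moreover have "((\<lambda>i. (T \<circ> snd) (k, i)) has_sum (\<Sum>\<^sub>\<infinity>i\<in>{i. \<mu> i = k}. T i)) {i. \<mu> i = k}" for k
  proof -
    have "T summable_on {i. \<mu> i = k}"
      using assms summable_on_subset_banach has_sum_imp_summable by blast
    then show ?thesis by (simp add: has_sum_infsum)
  qed
  ultimately show ?thesis by (rule has_sum_Sigma')
qed

lemma PS_group:
  fixes a :: "'i \<Rightarrow> real" and \<mu> :: "'i \<Rightarrow> ('n::finite \<Rightarrow> nat)"
  assumes r: "0 < r" and s: "(\<lambda>i. \<bar>a i\<bar> * r ^ deg (\<mu> i)) summable_on UNIV"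
    and h: "\<And>y. \<forall>i. \<bar>y$i\<bar> \<le> r \<Longrightarrow> ((\<lambda>i. a i * mon y (\<mu> i)) has_sum f (p + y)) UNIV"
  shows "PS p r f (\<lambda>k. \<Sum>\<^sub>\<infinity>i\<in>{i. \<mu> i = k}. a i)"
    and "Nrm r (\<lambda>k. \<Sum>\<^sub>\<infinity>i\<in>{i. \<mu> i = k}. a i) \<le> (\<Sum>\<^sub>\<infinity>i. \<bar>a i\<bar> * r ^ deg (\<mu> i))"
proof -
  define e where "e k = (\<Sum>\<^sub>\<infinity>i\<in>{i. \<mu> i = k}. a i)" for k
  define W where "W i = \<bar>a i\<bar> * r ^ deg (\<mu> i)" for i
  have WS: "(W has_sum (\<Sum>\<^sub>\<infinity>i. W i)) UNIV" using s unfolding W_def[abs_def] by (rule has_sum_infsum)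
  have G: "((\<lambda>k. \<Sum>\<^sub>\<infinity>i\<in>{i. \<mu> i = k}. W i) has_sum (\<Sum>\<^sub>\<infinity>i. W i)) UNIV"
    by (rule group_has_sum[OF WS])
  have Wsub: "W summable_on {i. \<mu> i = k}" for k
    using WS summable_on_subset_banach has_sum_imp_summable by blast
  have le: "\<bar>e k\<bar> * r ^ deg k \<le> (\<Sum>\<^sub>\<infinity>i\<in>{i. \<mu> i = k}. W i)" for k
  proof -
    have "\<bar>e k\<bar> * r ^ deg k = \<bar>\<Sum>\<^sub>\<infinity>i\<in>{i. \<mu> i = k}. a i * r ^ deg k\<bar>"
      using r by (simp add: e_def infsum_cmult_left' abs_mult)
    also have "\<dots> \<le> (\<Sum>\<^sub>\<infinity>i\<in>{i. \<mu> i = k}. norm (a i * r ^ deg k))"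
    proof -
      have "(\<lambda>i. norm (a i * r ^ deg k)) summable_on {i. \<mu> i = k}"
        using Wsub[of k] r by (subst summable_on_cong[where g = W]) (auto simp: W_def abs_mult)
      from norm_infsum_bound[OF this] show ?thesis by simp
    qed
    also have "\<dots> = (\<Sum>\<^sub>\<infinity>i\<in>{i. \<mu> i = k}. W i)"
      using r by (intro infsum_cong) (auto simp: W_def abs_mult)
    finally show ?thesis .
  qed
  have s2: "(\<lambda>k. \<bar>e k\<bar> * r ^ deg k) summable_on UNIV"
    by (rule summable_on_comparison_test[OF has_sum_imp_summable[OF G] le]) (use r in auto)
  show "Nrm r (\<lambda>k. \<Sum>\<^sub>\<infinity>i\<in>{i. \<mu> i = k}. a i) \<le> (\<Sum>\<^sub>\<infinity>i. \<bar>a i\<bar> * r ^ deg (\<mu> i))"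
  proof -
    have "Nrm r e \<le> (\<Sum>\<^sub>\<infinity>k. \<Sum>\<^sub>\<infinity>i\<in>{i. \<mu> i = k}. W i)"
      unfolding Nrm_def by (intro infsum_mono s2 le has_sum_imp_summable[OF G])
    also have "\<dots> = (\<Sum>\<^sub>\<infinity>i. W i)" using G infsumI by blast
    finally show ?thesis by (simp add: e_def[abs_def] W_def)
  qed
  show "PS p r f (\<lambda>k. \<Sum>\<^sub>\<infinity>i\<in>{i. \<mu> i = k}. a i)"
    unfolding PS_def
  proof (intro conjI allI impI)
    show "(\<lambda>k. \<bar>\<Sum>\<^sub>\<infinity>i\<in>{i. \<mu> i = k}. a i\<bar> * r ^ deg k) summable_on UNIV"
      using s2 by (simp add: e_def)
    fix y :: "real^'n" assume y: "\<forall>i. \<bar>y$i\<bar> \<le> r"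
    have "((\<lambda>k. \<Sum>\<^sub>\<infinity>i\<in>{i. \<mu> i = k}. a i * mon y (\<mu> i)) has_sum f (p + y)) UNIV"
      by (rule group_has_sum[OF h[OF y]])
    moreover have "(\<Sum>\<^sub>\<infinity>i\<in>{i. \<mu> i = k}. a i * mon y (\<mu> i)) = (\<Sum>\<^sub>\<infinity>i\<in>{i. \<mu> i = k}. a i) * mon y k" for k
    proof -
      have "(\<Sum>\<^sub>\<infinity>i\<in>{i. \<mu> i = k}. a i * mon y (\<mu> i)) = (\<Sum>\<^sub>\<infinity>i\<in>{i. \<mu> i = k}. a i * mon y k)"
        by (intro infsum_cong) auto
      then show ?thesis by (simp add: infsum_cmult_left')
    qed
    ultimately show "((\<lambda>k. (\<Sum>\<^sub>\<infinity>i\<in>{i. \<mu> i = k}. a i) * mon y k) has_sum f (p + y)) UNIV"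
      by simp
  qed (use r in auto)
qed

lemma has_sum_prod2:
  fixes F :: "'a \<Rightarrow> real" and G :: "'b \<Rightarrow> real"
  assumes F: "(F has_sum S) UNIV" and G: "(G has_sum T) UNIV"
  shows "((\<lambda>(k,l). F k * G l) has_sum S * T) UNIV"
proof -
  have aF: "(\<lambda>k. \<bar>F k\<bar>) summable_on UNIV"
    using has_sum_imp_summable[OF F] summable_on_iff_abs_summable_on_real by auto
  have aG: "(\<lambda>l. \<bar>G l\<bar>) summable_on UNIV"
    using has_sum_imp_summable[OF G] summable_on_iff_abs_summable_on_real by auto
  have "(\<lambda>(k,l). \<bar>F k\<bar> * \<bar>G l\<bar>) summable_on Sigma UNIV (\<lambda>_. UNIV)"
  proof (rule summable_on_SigmaI)
    show "((\<lambda>l. (\<lambda>(k,l). \<bar>F k\<bar> * \<bar>G l\<bar>) (k, l)) has_sum \<bar>F k\<bar> * (\<Sum>\<^sub>\<infinity>l. \<bar>G l\<bar>)) UNIV" for k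
      using has_sum_cmult_right[OF has_sum_infsum[OF aG]] by simp
    show "(\<lambda>k. \<bar>F k\<bar> * (\<Sum>\<^sub>\<infinity>l. \<bar>G l\<bar>)) summable_on UNIV"
      using summable_on_cmult_left[OF aF] by simp
  qed auto
  then have "(\<lambda>(k,l). F k * G l) summable_on UNIV"
    by (subst summable_on_iff_abs_summable_on_real) (simp add: case_prod_unfold abs_mult)
  then have sm: "(\<lambda>(k,l). F k * G l) summable_on Sigma UNIV (\<lambda>_. UNIV)" by simp
  have "((\<lambda>(k,l). F k * G l) has_sum S * T) (Sigma UNIV (\<lambda>_. UNIV))"
  proof (rule has_sum_SigmaI[OF _ _ sm])
    show "((\<lambda>l. (\<lambda>(k,l). F k * G l) (k, l)) has_sum F k * T) UNIV" for k
      using has_sum_cmult_right[OF G] by simp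
    show "((\<lambda>k. F k * T) has_sum S * T) UNIV"
      using has_sum_cmult_left[OF F] by simp
  qed
  then show ?thesis by simp
qed

lemma PS_add:
  assumes "PS p r f c" "PS p r g d"
  shows "PS p r (\<lambda>x. f x + g x) (\<lambda>k. c k + d k)"
  unfolding PS_def
proof (intro conjI allI impI)
  have "(\<lambda>k. \<bar>c k\<bar> * r ^ deg k + \<bar>d k\<bar> * r ^ deg k) summable_on UNIV"
    using assms unfolding PS_def by (intro summable_on_add) auto
  then show "(\<lambda>k. \<bar>c k + d k\<bar> * r ^ deg k) summable_on UNIV"
    by (rule summable_on_comparison_test)
       (use assms in \<open>auto simp: PS_def distrib_right[symmetric] intro!: mult_right_mono abs_triangle_ineq\<close>)
  fix y :: "real^'a" assume "\<forall>i. \<bar>y$i\<bar> \<le> r"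
  then show "((\<lambda>k. (c k + d k) * mon y k) has_sum f (p + y) + g (p + y)) UNIV"
    using assms unfolding PS_def by (simp add: distrib_right has_sum_add)
qed (use assms in \<open>auto simp: PS_def\<close>)

lemma PS_cmult:
  assumes "PS p r f c"
  shows "PS p r (\<lambda>x. a * f x) (\<lambda>k. a * c k)" and "Nrm r (\<lambda>k. a * c k) = \<bar>a\<bar> * Nrm r c"
proof -
  show "PS p r (\<lambda>x. a * f x) (\<lambda>k. a * c k)"
    unfolding PS_def
  proof (intro conjI allI impI)
    show "(\<lambda>k. \<bar>a * c k\<bar> * r ^ deg k) summable_on UNIV"
    proof -
      have "(\<lambda>k. \<bar>a\<bar> * (\<bar>c k\<bar> * r ^ deg k)) summable_on UNIV"
        using assms unfolding PS_def by (intro summable_on_cmult_right) auto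
      then show ?thesis by (simp add: abs_mult mult.assoc)
    qed
    fix y :: "real^'a" assume "\<forall>i. \<bar>y$i\<bar> \<le> r"
    then have "((\<lambda>k. c k * mon y k) has_sum f (p + y)) UNIV"
      using assms unfolding PS_def by auto
    from has_sum_cmult_right[OF this, of a]
    show "((\<lambda>k. a * c k * mon y k) has_sum a * f (p + y)) UNIV" by (simp add: mult.assoc)
  qed (use assms in \<open>auto simp: PS_def\<close>)
  show "Nrm r (\<lambda>k. a * c k) = \<bar>a\<bar> * Nrm r c"
    unfolding Nrm_def by (simp add: abs_mult mult.assoc infsum_cmult_right')
qed

lemma PS_mult:
  assumes f: "PS p r f c" and g: "PS p r g d"
  shows "\<exists>e. PS p r (\<lambda>x. f x * g x) e \<and> Nrm r e \<le> Nrm r c * Nrm r d"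
proof -
  define a where "a = (\<lambda>(k::'a \<Rightarrow> nat, l::'a \<Rightarrow> nat). c k * d l)"
  define \<mu> where "\<mu> = (\<lambda>(k::'a \<Rightarrow> nat, l::'a \<Rightarrow> nat). (\<lambda>i. k i + l i))"
  have r: "0 < r" using f unfolding PS_def by auto
  have Wh: "((\<lambda>(k,l). (\<bar>c k\<bar> * r ^ deg k) * (\<bar>d l\<bar> * r ^ deg l)) has_sum Nrm r c * Nrm r d) UNIV"
    using f g unfolding PS_def Nrm_def by (intro has_sum_prod2) auto
  have eqW: "(\<lambda>i. \<bar>a i\<bar> * r ^ deg (\<mu> i)) = (\<lambda>(k,l). (\<bar>c k\<bar> * r ^ deg k) * (\<bar>d l\<bar> * r ^ deg l))"
    by (simp add: a_def \<mu>_def deg_add power_add abs_mult fun_eq_iff mult_ac)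
  have s: "(\<lambda>i. \<bar>a i\<bar> * r ^ deg (\<mu> i)) summable_on UNIV"
    unfolding eqW by (rule has_sum_imp_summable[OF Wh])
  have h: "((\<lambda>i. a i * mon y (\<mu> i)) has_sum f (p + y) * g (p + y)) UNIV" if "\<forall>i. \<bar>y$i\<bar> \<le> r" for y
  proof -
    have "((\<lambda>(k,l). (c k * mon y k) * (d l * mon y l)) has_sum f (p + y) * g (p + y)) UNIV"
      using f g that unfolding PS_def by (intro has_sum_prod2) auto
    moreover have "(\<lambda>i. a i * mon y (\<mu> i)) = (\<lambda>(k,l). (c k * mon y k) * (d l * mon y l))"
      by (simp add: a_def \<mu>_def mon_add fun_eq_iff mult_ac)
    ultimately show ?thesis by simp
  qed
  note G = PS_group[OF r s h]
  have "(\<Sum>\<^sub>\<infinity>i. \<bar>a i\<bar> * r ^ deg (\<mu> i)) = Nrm r c * Nrm r d"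
    unfolding eqW by (rule infsumI[OF Wh])
  then show ?thesis using G by (intro exI[of _ "\<lambda>k. \<Sum>\<^sub>\<infinity>i\<in>{i. \<mu> i = k}. a i"]) auto
qed

lemma PS_series:
  fixes g :: "nat \<Rightarrow> real^'n::finite \<Rightarrow> real" and cs :: "nat \<Rightarrow> ('n \<Rightarrow> nat) \<Rightarrow> real"
  assumes r: "0 < r" and g: "\<And>j. PS p r (g j) (cs j)"
    and sN: "(\<lambda>j. Nrm r (cs j)) summable_on UNIV"
    and hF: "\<And>y. \<forall>i. \<bar>y$i\<bar> \<le> r \<Longrightarrow> ((\<lambda>j. g j (p + y)) has_sum F (p + y)) UNIV"
  shows "\<exists>e. PS p r F e"
proof -
  define a where "a = (\<lambda>(j::nat, k::'n \<Rightarrow> nat). cs j k)"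
  define \<mu> where "\<mu> = (\<lambda>(j::nat, k::'n \<Rightarrow> nat). k)"
  have sW: "(\<lambda>(j,k). \<bar>cs j k\<bar> * r ^ deg k) summable_on Sigma UNIV (\<lambda>_. UNIV)"
  proof (rule summable_on_SigmaI)
    show "((\<lambda>k. (\<lambda>(j,k). \<bar>cs j k\<bar> * r ^ deg k) (j, k)) has_sum Nrm r (cs j)) UNIV" for j
      using g[of j] unfolding PS_def Nrm_def by (auto intro: has_sum_infsum)
  qed (use sN r in auto)
  have s: "(\<lambda>i. \<bar>a i\<bar> * r ^ deg (\<mu> i)) summable_on UNIV"
    using sW by (simp add: a_def \<mu>_def case_prod_unfold)
  have h: "((\<lambda>i. a i * mon y (\<mu> i)) has_sum F (p + y)) UNIV" if y: "\<forall>i. \<bar>y$i\<bar> \<le> r" for y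
  proof -
    have "(\<lambda>i. norm (a i * mon y (\<mu> i))) summable_on UNIV"
      by (rule Infinite_Sum.abs_summable_on_comparison_test'[OF s])
         (use mon_bound[OF y] r in \<open>auto simp: abs_mult intro!: mult_left_mono\<close>)
    then have sm: "(\<lambda>(j,k). cs j k * mon y k) summable_on Sigma UNIV (\<lambda>_. UNIV)"
      by (subst summable_on_iff_abs_summable_on_real) (simp add: a_def \<mu>_def case_prod_unfold)
    have "((\<lambda>(j,k). cs j k * mon y k) has_sum F (p + y)) (Sigma UNIV (\<lambda>_. UNIV))"
    proof (rule has_sum_SigmaI[OF _ _ sm])
      show "((\<lambda>k. (\<lambda>(j,k). cs j k * mon y k) (j, k)) has_sum g j (p + y)) UNIV" for j
        using g[of j] y unfolding PS_def by auto
      show "((\<lambda>j. g j (p + y)) has_sum F (p + y)) UNIV" by (rule hF[OF y])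
    qed
    then show ?thesis by (simp add: a_def \<mu>_def case_prod_unfold)
  qed
  show ?thesis using PS_group(1)[OF r s h] by blast
qed

lemma Nrm_shrink:
  assumes "PS p r f c" "c (\<lambda>_. 0) = 0" "0 < r'" "r' \<le> r"
  shows "Nrm r' c \<le> (r' / r) * Nrm r c"
proof -
  have r: "0 < r" using assms by auto
  have s: "(\<lambda>k. \<bar>c k\<bar> * r ^ deg k) summable_on UNIV" using assms unfolding PS_def by auto
  have s': "(\<lambda>k. \<bar>c k\<bar> * r' ^ deg k) summable_on UNIV"
    using PS_mon_r(1)[OF assms(1,3,4)] unfolding PS_def by auto
  have le: "\<bar>c k\<bar> * r' ^ deg k \<le> (r' / r) * (\<bar>c k\<bar> * r ^ deg k)" for k
  proof (cases "k = (\<lambda>_. 0)")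
    case True then show ?thesis using assms by simp
  next
    case False
    then obtain d where d: "deg k = Suc d" using deg_pos[OF False] by (cases "deg k") auto
    have "r' ^ d \<le> r ^ d" using assms by (intro power_mono) auto
    then have "r' * r' ^ d \<le> r' * r ^ d" using assms by (intro mult_left_mono) auto
    also have "r' * r ^ d = (r' / r) * (r * r ^ d)" using r by simp
    finally have "r' ^ deg k \<le> (r' / r) * r ^ deg k" by (simp add: d)
    then have "\<bar>c k\<bar> * r' ^ deg k \<le> \<bar>c k\<bar> * ((r' / r) * r ^ deg k)" by (rule mult_left_mono) simp
    then show ?thesis by (simp add: mult_ac)
  qed
  have "Nrm r' c \<le> (\<Sum>\<^sub>\<infinity>k. (r' / r) * (\<bar>c k\<bar> * r ^ deg k))"
    unfolding Nrm_def by (intro infsum_mono s' le summable_on_cmult_right s)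
  also have "\<dots> = (r' / r) * Nrm r c" unfolding Nrm_def by (rule infsum_cmult_right')
  finally show ?thesis .
qed

lemma PS_one:
  assumes "0 < r"
  shows "PS p r (\<lambda>_. b) (\<lambda>k. if k = (\<lambda>_. 0) then b else 0)"
    and "Nrm r (\<lambda>k. if k = (\<lambda>_. 0) then b else 0) = \<bar>b\<bar>"
proof -
  show "PS p r (\<lambda>_. b) (\<lambda>k. if k = (\<lambda>_. 0) then b else 0)"
    by (rule PS_finite[where F = "{\<lambda>_. 0}"]) (use assms in auto)
  have "((\<lambda>k. \<bar>if k = (\<lambda>_. 0) then b else 0\<bar> * r ^ deg k) has_sum \<bar>b\<bar>) UNIV"
    by (rule has_sum_finite_neutralI[where B = "{\<lambda>_. 0}"]) auto
  then show "Nrm r (\<lambda>k. if k = (\<lambda>_. 0) then b else 0) = \<bar>b\<bar>"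
    unfolding Nrm_def by (rule infsumI)
qed

lemma PS_inverse:
  assumes f: "PS p r f c" and f0: "f p \<noteq> 0"
  shows "\<exists>r' e. PS p r' (\<lambda>x. inverse (f x)) e"
proof -
  have r: "0 < r" using f unfolding PS_def by auto
  define a where "a = f p"
  have ac: "a = c (\<lambda>_. 0)" using PS_value0[OF f] a_def by simp
  define h where "h x = 1 + (- 1 / a) * f x" for x
  define hc where "hc k = (if k = (\<lambda>_. 0) then 1 else 0) + (- 1 / a) * c k" for k
  have Ph: "PS p r h hc"
    unfolding h_def[abs_def] hc_def[abs_def] by (intro PS_add PS_one(1) r PS_cmult(1) f)
  have hc0: "hc (\<lambda>_. 0) = 0" using f0 by (simp add: hc_def ac[symmetric] a_def)
  define N where "N = Nrm r hc"
  have N0: "N \<ge> 0" using r by (simp add: N_def Nrm_nonneg)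
  define r' where "r' = r / (2 * (N + 1))"
  have r'0: "0 < r'" and r'r: "r' \<le> r" using r N0 by (auto simp: r'_def field_simps)
  define q where "q = Nrm r' hc"
  have q0: "0 \<le> q" using r'0 by (simp add: q_def Nrm_nonneg)
  have "q \<le> (r' / r) * N" using Nrm_shrink[OF Ph hc0 r'0 r'r] by (simp add: q_def N_def)
  also have "(r' / r) * N = N / (2 * (N + 1))"
  proof -
    have "r' / r = 1 / (2 * (N + 1))" using r N0 by (simp add: r'_def)
    then show ?thesis by simp
  qed
  also have "\<dots> < 1" using N0 by (simp add: field_simps)
  finally have q1: "q < 1" .
  have Ph': "PS p r' h hc" using PS_mon_r(1)[OF Ph r'0 r'r] .
  have pw: "\<exists>e. PS p r' (\<lambda>x. h x ^ j) e \<and> Nrm r' e \<le> q ^ j" for j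
  proof (induction j)
    case 0
    show ?case
      by (intro exI[of _ "\<lambda>k. if k = (\<lambda>_. 0) then 1 else 0"] conjI)
         (simp_all add: PS_one[OF r'0])
  next
    case (Suc j)
    then obtain e where e: "PS p r' (\<lambda>x. h x ^ j) e" "Nrm r' e \<le> q ^ j" by blast
    from PS_mult[OF e(1) Ph'] obtain e' where
      e': "PS p r' (\<lambda>x. h x ^ j * h x) e'" "Nrm r' e' \<le> Nrm r' e * Nrm r' hc" by blast
    have "Nrm r' e * Nrm r' hc \<le> q ^ j * q"
      using e(2) q0 r'0 by (intro mult_mono) (auto simp: q_def Nrm_nonneg)
    then show ?case using e' by (intro exI[of _ e']) (auto simp: mult.commute)
  qed
  then obtain E where E: "\<And>j. PS p r' (\<lambda>x. h x ^ j) (E j)" "\<And>j. Nrm r' (E j) \<le> q ^ j"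
    by metis
  define g where "g j x = (1 / a) * h x ^ j" for j x
  define cs where "cs j k = (1 / a) * E j k" for j k
  have Pg: "PS p r' (g j) (cs j)" for j
    unfolding g_def[abs_def] cs_def[abs_def] by (rule PS_cmult(1)[OF E(1)])
  have Ng: "Nrm r' (cs j) \<le> \<bar>1 / a\<bar> * q ^ j" for j
    unfolding cs_def[abs_def] using PS_cmult(2)[OF E(1)[of j], of "1/a"] E(2)[of j]
    by (simp add: divide_right_mono)
  have geo: "(\<lambda>j. q ^ j) summable_on UNIV"
    using q0 q1 by (intro summable_nonneg_imp_summable_on summable_geometric) auto
  have sN: "(\<lambda>j. Nrm r' (cs j)) summable_on UNIV"
    by (rule summable_on_comparison_test[OF summable_on_cmult_right[OF geo, of "\<bar>1/a\<bar>"] Ng])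
       (use r'0 in \<open>auto simp: Nrm_nonneg\<close>)
  have hF: "((\<lambda>j. g j (p + y)) has_sum inverse (f (p + y))) UNIV" if y: "\<forall>i. \<bar>y$i\<bar> \<le> r'" for y
  proof -
    define z where "z = h (p + y)"
    have z1: "\<bar>z\<bar> < 1" using PS_bound[OF Ph' y] q1 by (simp add: z_def q_def)
    have "(\<lambda>n. z ^ n) sums (1 / (1 - z))" using geometric_sums[of z] z1 by simp
    moreover have "summable (\<lambda>n. norm (z ^ n))"
      using z1 by (simp add: power_abs summable_geometric)
    ultimately have "((\<lambda>n. z ^ n) has_sum (1 / (1 - z))) UNIV"
      using norm_summable_imp_has_sum by blast
    from has_sum_cmult_right[OF this, of "1 / a"]
    have "((\<lambda>n. (1 / a) * z ^ n) has_sum (1 / a) * (1 / (1 - z))) UNIV" .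
    moreover have "(1 / a) * (1 / (1 - z)) = inverse (f (p + y))"
      using f0 by (simp add: z_def h_def a_def[symmetric] field_simps)
    ultimately show ?thesis by (simp add: g_def z_def)
  qed
  from PS_series[OF r'0 Pg sN hF] show ?thesis by blast
qed

definition AN :: "(real^'n::finite \<Rightarrow> real) \<Rightarrow> real^'n \<Rightarrow> bool" where
  "AN f p \<longleftrightarrow> (\<exists>r c. PS p r f c)"

lemma AN_real_analytic:
  assumes "\<And>p. p \<in> U \<Longrightarrow> AN f p"
  shows "real_analytic_on f U"
  unfolding real_analytic_on_def
proof
  fix p assume "p \<in> U"
  then obtain r c where P: "PS p r f c" using assms unfolding AN_def by blast
  show "\<exists>r>0. \<exists>c. \<forall>x\<in>ball p r. ((\<lambda>k. c k * (\<Prod>i\<in>UNIV. (x$i - p$i) ^ k i)) has_sum f x) UNIV"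
  proof (intro exI conjI ballI)
    show "0 < r" using P unfolding PS_def by auto
    fix x assume x: "x \<in> ball p r"
    have "\<forall>i. \<bar>(x - p)$i\<bar> \<le> r"
    proof
      fix i
      have "\<bar>(x - p)$i\<bar> \<le> norm (x - p)" by (rule component_le_norm_cart)
      also have "\<dots> < r" using x by (simp add: dist_norm norm_minus_commute)
      finally show "\<bar>(x - p)$i\<bar> \<le> r" by simp
    qed
    moreover have "\<forall>y. (\<forall>i. \<bar>y$i\<bar> \<le> r) \<longrightarrow> ((\<lambda>k. c k * mon y k) has_sum f (p + y)) UNIV"
      using P unfolding PS_def by blast
    ultimately have "((\<lambda>k. c k * mon (x - p) k) has_sum f (p + (x - p))) UNIV"
      by blast
    then show "((\<lambda>k. c k * (\<Prod>i\<in>UNIV. (x$i - p$i) ^ k i)) has_sum f x) UNIV"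
      by (simp add: mon_def)
  qed
qed

lemma AN_const: "AN (\<lambda>_. b) p"
  unfolding AN_def using PS_one(1)[of 1] by (metis zero_less_one)

lemma AN_coord: "AN (\<lambda>x. x$j) p"
proof -
  define \<delta> where "\<delta> = (\<lambda>i. if i = j then 1 else (0::nat))"
  have d0: "\<delta> \<noteq> (\<lambda>_. 0)" by (auto simp: \<delta>_def fun_eq_iff)
  have md: "mon y \<delta> = y$j" for y :: "real^'a"
  proof -
    have "mon y \<delta> = (\<Prod>i\<in>UNIV. if i = j then y$i else 1)"
      unfolding mon_def \<delta>_def by (intro prod.cong) auto
    also have "\<dots> = y$j" by (subst prod.delta) auto
    finally show ?thesis .
  qed
  have "PS p 1 (\<lambda>x. x$j) (\<lambda>k. if k = (\<lambda>_. 0) then p$j else if k = \<delta> then 1 else 0)"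
  proof (rule PS_finite[where F = "{\<lambda>_. 0, \<delta>}"])
    fix y :: "real^'a"
    show "(p + y)$j = (\<Sum>k\<in>{\<lambda>_. 0, \<delta>}. (if k = (\<lambda>_. 0) then p$j else if k = \<delta> then 1 else 0) * mon y k)"
      using d0 by (simp add: md)
  qed auto
  then show ?thesis unfolding AN_def by blast
qed

lemma AN_add: assumes "AN f p" "AN g p" shows "AN (\<lambda>x. f x + g x) p"
proof -
  obtain r c s d where f: "PS p r f c" and g: "PS p s g d" using assms unfolding AN_def by blast
  have "0 < min r s" using f g unfolding PS_def by auto
  then have "PS p (min r s) f c" "PS p (min r s) g d"
    using PS_mon_r(1)[OF f] PS_mon_r(1)[OF g] by auto
  then show ?thesis unfolding AN_def using PS_add by blast
qed

lemma AN_mult: assumes "AN f p" "AN g p" shows "AN (\<lambda>x. f x * g x) p"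
proof -
  obtain r c s d where f: "PS p r f c" and g: "PS p s g d" using assms unfolding AN_def by blast
  have "0 < min r s" using f g unfolding PS_def by auto
  then have "PS p (min r s) f c" "PS p (min r s) g d"
    using PS_mon_r(1)[OF f] PS_mon_r(1)[OF g] by auto
  then show ?thesis unfolding AN_def using PS_mult by blast
qed

lemma AN_inverse: assumes "AN f p" "f p \<noteq> 0" shows "AN (\<lambda>x. inverse (f x)) p"
  using assms PS_inverse unfolding AN_def by blast

lemma AN_diff: assumes "AN f p" "AN g p" shows "AN (\<lambda>x. f x - g x) p"
proof -
  have "AN (\<lambda>x. f x + (-1) * g x) p" by (intro AN_add AN_mult AN_const assms)
  then show ?thesis by simp
qed

lemma AN_divide: assumes "AN f p" "AN g p" "g p \<noteq> 0" shows "AN (\<lambda>x. f x / g x) p"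
proof -
  have "AN (\<lambda>x. f x * inverse (g x)) p" by (intro AN_mult AN_inverse assms)
  then show ?thesis by (simp add: divide_inverse)
qed

lemma AN_sum: assumes "finite S" "\<And>i. i \<in> S \<Longrightarrow> AN (f i) p" shows "AN (\<lambda>x. \<Sum>i\<in>S. f i x) p"
  using assms by (induction S rule: finite_induct) (auto intro: AN_add AN_const)

lemma AN_mv: "AN (\<lambda>x. (M *v x) $ i) p"
  unfolding matrix_vector_mult_def by (simp, intro AN_sum AN_mult AN_const AN_coord) auto

lemma AN_inner: "AN (\<lambda>x. (M *v x) \<bullet> (N *v x)) p"
  unfolding inner_vec_def inner_real_def by (intro AN_sum AN_mult AN_mv) auto


lemma sym_inner:
  assumes "symmetric_mat M"
  shows "(M *v x) \<bullet> y = x \<bullet> (M *v y)"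
proof -
  have "x v* M = x v* transpose M" using assms by (simp add: symmetric_mat_def)
  also have "\<dots> = M *v x" by (rule vector_transpose_matrix)
  finally have "x v* M = M *v x" .
  then show ?thesis using dot_lmul_matrix[of x M y] by simp
qed

lemma Qf_add:
  assumes "symmetric_mat M"
  shows "Qf M (x + h) = Qf M x + 2 * (h \<bullet> (M *v x)) + Qf M h"
proof -
  have "x \<bullet> (M *v h) = h \<bullet> (M *v x)"
    using sym_inner[OF assms, of x h] by (simp add: inner_commute)
  then show ?thesis
    by (simp add: Qf_def matrix_vector_right_distrib inner_add_left inner_add_right)
qed

lemma Qf_scale: "Qf M (t *\<^sub>R y) = t^2 * Qf M y"
  by (simp add: Qf_def matrix_vector_mult_scaleR power2_eq_square)

lemma Qf_tendsto:
  assumes "(f \<longlongrightarrow> l) F"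
  shows "((\<lambda>x. Qf M (f x)) \<longlongrightarrow> Qf M l) F"
  unfolding Qf_def
  by (intro tendsto_inner assms bounded_linear.tendsto[OF matrix_vector_mul_bounded_linear])

lemma Qf_cont_on:
  assumes "continuous_on S f"
  shows "continuous_on S (\<lambda>x. Qf M (f x))"
  unfolding Qf_def
  by (intro continuous_on_inner assms bounded_linear.continuous_on[OF matrix_vector_mul_bounded_linear])

lemma Qf_bound: "\<exists>K>0. \<forall>y. \<bar>Qf M y\<bar> \<le> K * (norm y)^2"
proof -
  obtain K where K: "K > 0" "\<And>x. norm (M *v x) \<le> norm x * K"
    using bounded_linear.pos_bounded[OF matrix_vector_mul_bounded_linear[of M]] by blast
  have "\<bar>Qf M y\<bar> \<le> K * (norm y)^2" for y
  proof -
    have "\<bar>Qf M y\<bar> \<le> norm y * norm (M *v y)" unfolding Qf_def by (rule Cauchy_Schwarz_ineq2)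
    also have "\<dots> \<le> norm y * (norm y * K)" by (intro mult_left_mono K(2)) auto
    finally show ?thesis by (simp add: power2_eq_square mult_ac)
  qed
  then show ?thesis using K(1) by blast
qed

lemma lagrange_id:
  fixes a b :: "real^'n"
  shows "(\<Sum>i\<in>UNIV. \<Sum>j\<in>UNIV. (a$i * b$j - a$j * b$i)^2) = 2 * ((a \<bullet> a) * (b \<bullet> b) - (a \<bullet> b)^2)"
proof -
  have "(\<Sum>i\<in>UNIV. \<Sum>j\<in>UNIV. (a$i * b$j - a$j * b$i)^2)
      = (\<Sum>i\<in>UNIV. \<Sum>j\<in>UNIV. (a$i*a$i) * (b$j*b$j) + (b$i*b$i) * (a$j*a$j) - 2 * ((a$i*b$i) * (a$j*b$j)))"
    by (intro sum.cong refl) (simp add: power2_eq_square algebra_simps)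
  also have "\<dots> = (\<Sum>i\<in>UNIV. \<Sum>j\<in>UNIV. (a$i*a$i) * (b$j*b$j)) + (\<Sum>i\<in>UNIV. \<Sum>j\<in>UNIV. (b$i*b$i) * (a$j*a$j))
       - 2 * (\<Sum>i\<in>UNIV. \<Sum>j\<in>UNIV. (a$i*b$i) * (a$j*b$j))"
    by (simp add: sum_subtractf sum.distrib sum_distrib_left)
  also have "\<dots> = (\<Sum>i\<in>UNIV. a$i*a$i) * (\<Sum>j\<in>UNIV. b$j*b$j) + (\<Sum>i\<in>UNIV. b$i*b$i) * (\<Sum>j\<in>UNIV. a$j*a$j)
       - 2 * ((\<Sum>i\<in>UNIV. a$i*b$i) * (\<Sum>j\<in>UNIV. a$j*b$j))"
    by (simp only: sum_product)
  also have "\<dots> = 2 * ((a \<bullet> a) * (b \<bullet> b) - (a \<bullet> b)^2)"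
    by (simp add: inner_vec_def power2_eq_square algebra_simps)
  finally show ?thesis .
qed

lemma gram_pos:
  fixes a b :: "real^'n"
  assumes "wedge2 a b \<noteq> 0"
  shows "(a \<bullet> a) * (b \<bullet> b) - (a \<bullet> b)^2 > 0"
proof -
  from assms obtain i j where ij: "a$i * b$j - a$j * b$i \<noteq> 0"
    unfolding wedge2_def by (auto simp: vec_eq_iff)
  have "0 < (a$i * b$j - a$j * b$i)^2" using ij by simp
  also have "\<dots> \<le> (\<Sum>j'\<in>UNIV. (a$i * b$j' - a$j' * b$i)^2)"
    by (rule member_le_sum) auto
  also have "\<dots> \<le> (\<Sum>i'\<in>UNIV. \<Sum>j'\<in>UNIV. (a$i' * b$j' - a$j' * b$i')^2)"
    by (rule member_le_sum[where f = "\<lambda>i'. \<Sum>j'\<in>UNIV. (a$i' * b$j' - a$j' * b$i')^2"])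
       (auto intro: sum_nonneg)
  finally show ?thesis unfolding lagrange_id by simp
qed

lemma fst_le: "\<bar>fst (z::real\<times>real)\<bar> \<le> norm z"
  using norm_fst_le[of "fst z" "snd z"] by simp

lemma snd_le: "\<bar>snd (z::real\<times>real)\<bar> \<le> norm z"
  using norm_snd_le[of "snd z" "fst z"] by simp

lemma curve:
  fixes A B :: "real^'n^'n" and x0 v :: "real^'n"
  assumes symA: "symmetric_mat A" and symB: "symmetric_mat B"
    and QA0: "Qf A x0 = 0" and QB0: "Qf B x0 = 0"
    and D: "((A *v x0) \<bullet> (A *v x0)) * ((B *v x0) \<bullet> (B *v x0)) - ((A *v x0) \<bullet> (B *v x0))^2 > 0"
    and va: "v \<bullet> (A *v x0) = 0" and vb: "v \<bullet> (B *v x0) = 0"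
  shows "\<exists>K t0. 0 < t0 \<and> (\<forall>t. 0 < t \<and> t \<le> t0 \<longrightarrow>
           (\<exists>w. norm w \<le> K * t^2 \<and> Qf A (x0 + t *\<^sub>R v + w) = 0 \<and> Qf B (x0 + t *\<^sub>R v + w) = 0))"
proof -
  define a where "a = A *v x0"
  define b where "b = B *v x0"
  define g11 where "g11 = a \<bullet> a"
  define g12 where "g12 = a \<bullet> b"
  define g22 where "g22 = b \<bullet> b"
  define \<Delta> where "\<Delta> = g11 * g22 - g12^2"
  have D0: "\<Delta> > 0" using D by (simp add: \<Delta>_def g11_def g12_def g22_def a_def b_def)
  have g11: "g11 \<ge> 0" and g22: "g22 \<ge> 0" by (simp_all add: g11_def g22_def)
  obtain KA where KA: "KA > 0" "\<And>y. \<bar>Qf A y\<bar> \<le> KA * (norm y)^2" using Qf_bound by blast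
  obtain KB where KB: "KB > 0" "\<And>y. \<bar>Qf B y\<bar> \<le> KB * (norm y)^2" using Qf_bound by blast
  define Kc where "Kc = (g11 + g22 + 2 * \<bar>g12\<bar>) / (2 * \<Delta>)"
  have Kc0: "Kc \<ge> 0" using D0 g11 g22 by (simp add: Kc_def)
  define nv where "nv = norm v"
  define R where "R = Kc * (KA + KB) * (nv + 1)^2 + 1"
  have R1: "R \<ge> 1" using Kc0 KA KB by (simp add: R_def)
  define S where "S = norm a + norm b"
  have S0: "S \<ge> 0" by (simp add: S_def)
  define t0 where "t0 = min 1 (1 / (R * (S + 1)))"
  have t00: "t0 > 0" using R1 S0 by (simp add: t0_def)
  have main: "\<exists>w. norm w \<le> (R * S) * t^2 \<and> Qf A (x0 + t *\<^sub>R v + w) = 0 \<and> Qf B (x0 + t *\<^sub>R v + w) = 0"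
    if t: "0 < t" "t \<le> t0" for t
  proof -
    define r where "r = R * t^2"
    have r0: "r > 0" using R1 t by (simp add: r_def)
    have RtS: "R * t * S \<le> 1"
    proof -
      have "t \<le> 1 / (R * (S + 1))" using t by (simp add: t0_def)
      moreover have "R * (S + 1) > 0" using R1 S0 by simp
      ultimately have "t * (R * (S + 1)) \<le> 1" by (simp add: pos_le_divide_eq)
      moreover have "R * t * S \<le> t * (R * (S + 1))"
        using R1 t by (simp add: algebra_simps)
      ultimately show ?thesis by linarith
    qed
    define Y where "Y z = t *\<^sub>R v + fst z *\<^sub>R a + snd z *\<^sub>R b" for z :: "real \<times> real"
    define T where "T z = (- (g22 * Qf A (Y z) - g12 * Qf B (Y z)) / (2 * \<Delta>),
                           (g12 * Qf A (Y z) - g11 * Qf B (Y z)) / (2 * \<Delta>))" for z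
    have contY: "continuous_on (cball 0 r) Y"
      unfolding Y_def by (intro continuous_intros)
    have contT: "continuous_on (cball 0 r) T"
      unfolding T_def by (intro continuous_intros Qf_cont_on contY) (use D0 in auto)
    have normY: "norm (Y z) \<le> t * (nv + 1)" if z: "z \<in> cball 0 r" for z
    proof -
      have f: "\<bar>fst z\<bar> \<le> r" using z fst_le[of z] by (simp add: dist_norm)
      have s: "\<bar>snd z\<bar> \<le> r" using z snd_le[of z] by (simp add: dist_norm)
      have "norm (Y z) \<le> norm (t *\<^sub>R v) + norm (fst z *\<^sub>R a) + norm (snd z *\<^sub>R b)"
        unfolding Y_def by (meson norm_triangle_le norm_triangle_ineq add_mono order_refl)
      also have "\<dots> = t * nv + \<bar>fst z\<bar> * norm a + \<bar>snd z\<bar> * norm b"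
        using t by (simp add: nv_def)
      also have "\<dots> \<le> t * nv + r * norm a + r * norm b"
        using f s by (intro add_mono mult_right_mono) (auto simp: nv_def)
      also have "\<dots> = t * nv + t * (R * t * S)" by (simp add: r_def S_def power2_eq_square algebra_simps)
      also have "\<dots> \<le> t * nv + t * 1" using RtS t by (intro add_mono mult_left_mono) auto
      finally show ?thesis by (simp add: algebra_simps)
    qed
    have into: "T \<in> cball 0 r \<rightarrow> cball 0 r"
    proof
      fix z :: "real \<times> real" assume z: "z \<in> cball 0 r"
      define qa where "qa = Qf A (Y z)"
      define qb where "qb = Qf B (Y z)"
      have ny2: "(norm (Y z))^2 \<le> t^2 * (nv + 1)^2"
      proof -
        have "(norm (Y z))^2 \<le> (t * (nv + 1))^2" using normY[OF z] by (intro power_mono) auto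
        then show ?thesis by (simp add: power_mult_distrib)
      qed
      have qa: "\<bar>qa\<bar> \<le> KA * (t^2 * (nv + 1)^2)"
        unfolding qa_def by (rule order_trans[OF KA(2)[of "Y z"]]) (use ny2 KA(1) in simp)
      have qb: "\<bar>qb\<bar> \<le> KB * (t^2 * (nv + 1)^2)"
        unfolding qb_def by (rule order_trans[OF KB(2)[of "Y z"]]) (use ny2 KB(1) in simp)
      have "norm (T z) \<le> \<bar>(- (g22 * qa - g12 * qb)) / (2 * \<Delta>)\<bar> + \<bar>(g12 * qa - g11 * qb) / (2 * \<Delta>)\<bar>"
        unfolding T_def qa_def[symmetric] qb_def[symmetric] using norm_Pair_le real_norm_def by metis
      also have "\<dots> = (\<bar>g22 * qa - g12 * qb\<bar> + \<bar>g12 * qa - g11 * qb\<bar>) / (2 * \<Delta>)"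
        using D0 by (simp add: add_divide_distrib)
      also have "\<dots> \<le> ((g11 + g22 + 2 * \<bar>g12\<bar>) * (\<bar>qa\<bar> + \<bar>qb\<bar>)) / (2 * \<Delta>)"
      proof (intro divide_right_mono)
        have "\<bar>g22 * qa - g12 * qb\<bar> \<le> g22 * \<bar>qa\<bar> + \<bar>g12\<bar> * \<bar>qb\<bar>"
          using abs_triangle_ineq4[of "g22 * qa" "g12 * qb"] g22 by (simp add: abs_mult)
        moreover have "\<bar>g12 * qa - g11 * qb\<bar> \<le> \<bar>g12\<bar> * \<bar>qa\<bar> + g11 * \<bar>qb\<bar>"
          using abs_triangle_ineq4[of "g12 * qa" "g11 * qb"] g11 by (simp add: abs_mult)
        moreover have "g22 * \<bar>qa\<bar> + \<bar>g12\<bar> * \<bar>qb\<bar> + (\<bar>g12\<bar> * \<bar>qa\<bar> + g11 * \<bar>qb\<bar>)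
            \<le> (g11 + g22 + 2 * \<bar>g12\<bar>) * (\<bar>qa\<bar> + \<bar>qb\<bar>)"
          using g11 g22 by (simp add: algebra_simps)
        ultimately show "\<bar>g22 * qa - g12 * qb\<bar> + \<bar>g12 * qa - g11 * qb\<bar> \<le> (g11 + g22 + 2 * \<bar>g12\<bar>) * (\<bar>qa\<bar> + \<bar>qb\<bar>)"
          by linarith
      qed (use D0 in auto)
      also have "\<dots> = Kc * (\<bar>qa\<bar> + \<bar>qb\<bar>)" by (simp add: Kc_def)
      also have "\<dots> \<le> Kc * ((KA + KB) * (t^2 * (nv + 1)^2))"
        using qa qb Kc0 by (intro mult_left_mono) (auto simp: algebra_simps)
      also have "\<dots> = (Kc * (KA + KB) * (nv + 1)^2) * t^2" by (simp add: algebra_simps)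
      also have "\<dots> \<le> R * t^2" by (simp add: R_def mult_right_mono)
      finally show "T z \<in> cball 0 r" by (simp add: r_def)
    qed
    obtain z where z: "z \<in> cball 0 r" "T z = z"
      using brouwer_ball[OF r0 contT into] by blast
    define w where "w = fst z *\<^sub>R a + snd z *\<^sub>R b"
    have f: "\<bar>fst z\<bar> \<le> r" using z fst_le[of z] by (simp add: dist_norm)
    have s: "\<bar>snd z\<bar> \<le> r" using z snd_le[of z] by (simp add: dist_norm)
    have nw: "norm w \<le> (R * S) * t^2"
    proof -
      have "norm w \<le> \<bar>fst z\<bar> * norm a + \<bar>snd z\<bar> * norm b"
        unfolding w_def by (metis norm_scaleR norm_triangle_ineq)
      also have "\<dots> \<le> r * norm a + r * norm b" using f s by (intro add_mono mult_right_mono) auto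
      finally show ?thesis by (simp add: r_def S_def algebra_simps)
    qed
    define qa where "qa = Qf A (Y z)"
    define qb where "qb = Qf B (Y z)"
    have Yw: "t *\<^sub>R v + w = Y z" by (simp add: Y_def w_def add.assoc)
    have l: "fst z = - (g22 * qa - g12 * qb) / (2 * \<Delta>)" and m: "snd z = (g12 * qa - g11 * qb) / (2 * \<Delta>)"
      using z(2) unfolding T_def qa_def qb_def by (auto simp: prod_eq_iff)
    have e1: "2 * \<Delta> * fst z = - (g22 * qa - g12 * qb)" using l D0 by simp
    have e2: "2 * \<Delta> * snd z = g12 * qa - g11 * qb" using m D0 by simp
    have ba: "b \<bullet> a = g12" by (simp add: g12_def inner_commute)
    have ia: "Y z \<bullet> a = fst z * g11 + snd z * g12"
      using va ba by (simp add: Y_def a_def[symmetric] g11_def inner_add_left)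
    have ib: "Y z \<bullet> b = fst z * g12 + snd z * g22"
      using vb by (simp add: Y_def b_def[symmetric] g12_def g22_def inner_add_left)
    have "Qf A (x0 + (t *\<^sub>R v + w)) = 2 * (fst z * g11 + snd z * g12) + qa"
      using Qf_add[OF symA, of x0 "Y z"] QA0 ia by (simp add: Yw qa_def a_def)
    also have "\<dots> = 0"
    proof -
      have "\<Delta> * (2 * (fst z * g11 + snd z * g12) + qa) = g11 * (2 * \<Delta> * fst z) + g12 * (2 * \<Delta> * snd z) + qa * \<Delta>"
        by (simp add: algebra_simps)
      also have "\<dots> = 0" unfolding e1 e2 by (simp add: \<Delta>_def algebra_simps power2_eq_square)
      finally show ?thesis using D0 by simp
    qed
    finally have EA: "Qf A (x0 + t *\<^sub>R v + w) = 0" by (simp add: add.assoc)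
    have "Qf B (x0 + (t *\<^sub>R v + w)) = 2 * (fst z * g12 + snd z * g22) + qb"
      using Qf_add[OF symB, of x0 "Y z"] QB0 ib by (simp add: Yw qb_def b_def)
    also have "\<dots> = 0"
    proof -
      have "\<Delta> * (2 * (fst z * g12 + snd z * g22) + qb) = g12 * (2 * \<Delta> * fst z) + g22 * (2 * \<Delta> * snd z) + qb * \<Delta>"
        by (simp add: algebra_simps)
      also have "\<dots> = 0" unfolding e1 e2 by (simp add: \<Delta>_def algebra_simps power2_eq_square)
      finally show ?thesis using D0 by simp
    qed
    finally have EB: "Qf B (x0 + t *\<^sub>R v + w) = 0" by (simp add: add.assoc)
    show ?thesis using nw EA EB by blast
  qed
  show ?thesis using t00 main by blast
qed

lemma lim_zero:
  fixes f :: "real \<Rightarrow> real"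
  assumes "(f \<longlongrightarrow> L) (at_right 0)" "eventually (\<lambda>t. f t = 0) (at_right 0)"
  shows "L = 0"
proof -
  have "((\<lambda>_. 0) \<longlongrightarrow> L) (at_right (0::real))"
    by (rule Lim_transform_eventually[OF assms(1)]) (use assms(2) in \<open>auto elim: eventually_mono\<close>)
  then show ?thesis using tendsto_const_iff[OF trivial_limit_at_right_real] by metis
qed

lemma ev_right:
  assumes "0 < (t0::real)" "\<forall>t. 0 < t \<and> t \<le> t0 \<longrightarrow> P t"
  shows "eventually P (at_right 0)"
  using eventually_at_right_real[OF assms(1)] assms(2) by (auto elim: eventually_mono)

lemma U_tendsto:
  fixes W :: "real \<Rightarrow> real^'n"
  assumes "0 < t0" "\<forall>t. 0 < t \<and> t \<le> t0 \<longrightarrow> norm (W t) \<le> K * t^2"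
  shows "((\<lambda>t. (1 / t) *\<^sub>R W t) \<longlongrightarrow> 0) (at_right 0)"
proof (rule Lim_null_comparison)
  show "\<forall>\<^sub>F t in at_right 0. norm ((1 / t) *\<^sub>R W t) \<le> K * t"
  proof (rule ev_right[OF assms(1)], intro allI impI)
    fix t :: real assume t: "0 < t \<and> t \<le> t0"
    then have "norm (W t) \<le> K * t^2" using assms(2) by blast
    then have "norm (W t) / t \<le> K * t^2 / t" using t by (intro divide_right_mono) auto
    then show "norm ((1 / t) *\<^sub>R W t) \<le> K * t" using t by (simp add: power2_eq_square)
  qed
  show "((\<lambda>t. K * t) \<longlongrightarrow> 0) (at_right 0)"
    by (rule tendsto_mult_right_zero) (simp add: tendsto_ident_at)
qed

lemma pointwise:
  fixes A B C :: "real^'n^'n"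
  assumes symA: "symmetric_mat A" and symB: "symmetric_mat B" and symC: "symmetric_mat C"
    and hyp: "\<forall>z. Qf A z = 0 \<and> Qf B z = 0 \<longrightarrow> Qf C z = 0"
    and x0: "x0 \<in> calN A B"
  shows "\<exists>\<alpha> \<beta> :: real.
        (\<forall>v\<in>Vsp A B x0. Qf C v = \<alpha> * Qf A v + \<beta> * Qf B v) \<and>
        C *v x0 = \<alpha> *\<^sub>R (A *v x0) + \<beta> *\<^sub>R (B *v x0)"
proof -
  define a where "a = A *v x0"
  define b where "b = B *v x0"
  define c where "c = C *v x0"
  define g11 where "g11 = a \<bullet> a"
  define g12 where "g12 = a \<bullet> b"
  define g22 where "g22 = b \<bullet> b"
  define \<Delta> where "\<Delta> = g11 * g22 - g12^2"
  have QA0: "Qf A x0 = 0" and QB0: "Qf B x0 = 0" and wd: "wedge2 a b \<noteq> 0"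
    using x0 by (auto simp: calN_def a_def b_def)
  have QC0: "Qf C x0 = 0" using hyp QA0 QB0 by blast
  have D: "(a \<bullet> a) * (b \<bullet> b) - (a \<bullet> b)^2 > 0" by (rule gram_pos[OF wd])
  then have D0: "\<Delta> > 0" by (simp add: \<Delta>_def g11_def g12_def g22_def)
  define \<alpha> where "\<alpha> = (g22 * (c \<bullet> a) - g12 * (c \<bullet> b)) / \<Delta>"
  define \<beta> where "\<beta> = (g11 * (c \<bullet> b) - g12 * (c \<bullet> a)) / \<Delta>"
  define v where "v = c - \<alpha> *\<^sub>R a - \<beta> *\<^sub>R b"
  have ea: "\<Delta> * \<alpha> = g22 * (c \<bullet> a) - g12 * (c \<bullet> b)" using D0 by (simp add: \<alpha>_def)
  have eb: "\<Delta> * \<beta> = g11 * (c \<bullet> b) - g12 * (c \<bullet> a)" using D0 by (simp add: \<beta>_def)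
  have ba: "b \<bullet> a = g12" by (simp add: g12_def inner_commute)
  have va: "v \<bullet> a = 0"
  proof -
    have "\<Delta> * (v \<bullet> a) = \<Delta> * (c \<bullet> a) - (\<Delta> * \<alpha>) * g11 - (\<Delta> * \<beta>) * g12"
      by (simp add: v_def inner_diff_left ba g11_def algebra_simps)
    also have "\<dots> = 0" unfolding ea eb by (simp add: \<Delta>_def algebra_simps power2_eq_square)
    finally show ?thesis using D0 by simp
  qed
  have vb: "v \<bullet> b = 0"
  proof -
    have "\<Delta> * (v \<bullet> b) = \<Delta> * (c \<bullet> b) - (\<Delta> * \<alpha>) * g12 - (\<Delta> * \<beta>) * g22"
      by (simp add: v_def inner_diff_left g12_def g22_def algebra_simps)
    also have "\<dots> = 0" unfolding ea eb by (simp add: \<Delta>_def algebra_simps power2_eq_square)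
    finally show ?thesis using D0 by simp
  qed
  define F where "F y = Qf C y - \<alpha> * Qf A y - \<beta> * Qf B y" for y
  have Fvan: "F z = 0" if "Qf A z = 0" "Qf B z = 0" for z
    using hyp that by (simp add: F_def)
  have Fshift: "F (x0 + h) = 2 * (h \<bullet> v) + F h" for h
    using Qf_add[OF symA, of x0 h] Qf_add[OF symB, of x0 h] Qf_add[OF symC, of x0 h] QA0 QB0 QC0
    by (simp add: F_def v_def inner_diff_right a_def[symmetric] b_def[symmetric] c_def[symmetric] algebra_simps)
  have Fscale: "F (t *\<^sub>R y) = t^2 * F y" for t y
    by (simp add: F_def Qf_scale algebra_simps)
  have Ften: "((\<lambda>t. F (g t)) \<longlongrightarrow> F l) (at_right 0)" if "(g \<longlongrightarrow> l) (at_right (0::real))" for g l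
    unfolding F_def by (intro tendsto_intros Qf_tendsto that)
  have Dg: "((A *v x0) \<bullet> (A *v x0)) * ((B *v x0) \<bullet> (B *v x0)) - ((A *v x0) \<bullet> (B *v x0))^2 > 0"
    using D by (simp add: a_def b_def)
  have crv: "\<exists>K t0 W. 0 < t0 \<and> (\<forall>t. 0 < t \<and> t \<le> t0 \<longrightarrow> norm (W t) \<le> K * t^2 \<and> F (x0 + t *\<^sub>R u + W t) = 0)"
    if hu: "u \<bullet> a = 0" "u \<bullet> b = 0" for u
  proof -
    obtain K t0 where t0: "0 < t0" and K: "\<forall>t. 0 < t \<and> t \<le> t0 \<longrightarrow>
           (\<exists>w. norm w \<le> K * t^2 \<and> Qf A (x0 + t *\<^sub>R u + w) = 0 \<and> Qf B (x0 + t *\<^sub>R u + w) = 0)"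
      using curve[OF symA symB QA0 QB0 Dg, of u] hu by (auto simp: a_def b_def)
    define W where "W t = (SOME w. norm w \<le> K * t^2 \<and> Qf A (x0 + t *\<^sub>R u + w) = 0 \<and> Qf B (x0 + t *\<^sub>R u + w) = 0)" for t
    have "norm (W t) \<le> K * t^2 \<and> F (x0 + t *\<^sub>R u + W t) = 0" if "0 < t \<and> t \<le> t0" for t
    proof -
      have "norm (W t) \<le> K * t^2 \<and> Qf A (x0 + t *\<^sub>R u + W t) = 0 \<and> Qf B (x0 + t *\<^sub>R u + W t) = 0"
        unfolding W_def by (rule someI_ex) (use K that in blast)
      then show ?thesis using Fvan by blast
    qed
    then show ?thesis using t0 by blast
  qed
  have v0: "v = 0"
  proof -
    obtain K t0 W where t0: "0 < t0" and W: "\<forall>t. 0 < t \<and> t \<le> t0 \<longrightarrow> norm (W t) \<le> K * t^2 \<and> F (x0 + t *\<^sub>R v + W t) = 0"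
      using crv[OF va vb] by blast
    define U where "U t = (1 / t) *\<^sub>R W t" for t
    have U0: "(U \<longlongrightarrow> 0) (at_right 0)" unfolding U_def by (rule U_tendsto[OF t0]) (use W in blast)
    define G where "G t = 2 * (v \<bullet> v) + 2 * (U t \<bullet> v) + t * F (v + U t)" for t
    have "(G \<longlongrightarrow> 2 * (v \<bullet> v) + 2 * (0 \<bullet> v) + 0 * F (v + 0)) (at_right 0)"
      unfolding G_def by (intro tendsto_intros U0 Ften)
    moreover have "eventually (\<lambda>t. G t = 0) (at_right 0)"
    proof (rule ev_right[OF t0], intro allI impI)
      fix t :: real assume t: "0 < t \<and> t \<le> t0"
      have tv: "t *\<^sub>R v + W t = t *\<^sub>R (v + U t)" using t by (simp add: U_def scaleR_add_right)
      have "0 = F (x0 + (t *\<^sub>R v + W t))" using W t by (simp add: add.assoc)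
      also have "\<dots> = 2 * ((t *\<^sub>R v + W t) \<bullet> v) + t^2 * F (v + U t)" by (simp add: Fshift tv Fscale)
      also have "\<dots> = t * G t"
        using t by (simp add: G_def U_def inner_add_left power2_eq_square algebra_simps)
      finally show "G t = 0" using t by simp
    qed
    ultimately have "2 * (v \<bullet> v) + 2 * (0 \<bullet> v) + 0 * F (v + 0) = 0" by (rule lim_zero)
    then show ?thesis by simp
  qed
  have cab: "c = \<alpha> *\<^sub>R a + \<beta> *\<^sub>R b" using v0 by (simp add: v_def algebra_simps)
  have Q: "Qf C u = \<alpha> * Qf A u + \<beta> * Qf B u" if u: "u \<in> Vsp A B x0" for u
  proof -
    have "a \<in> span {a, b}" "b \<in> span {a, b}" by (auto intro: span_base)
    then have ua: "u \<bullet> a = 0" and ub: "u \<bullet> b = 0"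
      using u by (auto simp: Vsp_def orthogonal_comp_def orthogonal_def a_def b_def inner_commute)
    obtain K t0 W where t0: "0 < t0" and W: "\<forall>t. 0 < t \<and> t \<le> t0 \<longrightarrow> norm (W t) \<le> K * t^2 \<and> F (x0 + t *\<^sub>R u + W t) = 0"
      using crv[OF ua ub] by blast
    define U where "U t = (1 / t) *\<^sub>R W t" for t
    have U0: "(U \<longlongrightarrow> 0) (at_right 0)" unfolding U_def by (rule U_tendsto[OF t0]) (use W in blast)
    have "((\<lambda>t. F (u + U t)) \<longlongrightarrow> F (u + 0)) (at_right 0)"
      by (intro Ften tendsto_intros U0)
    moreover have "eventually (\<lambda>t. F (u + U t) = 0) (at_right 0)"
    proof (rule ev_right[OF t0], intro allI impI)
      fix t :: real assume t: "0 < t \<and> t \<le> t0"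
      have tv: "t *\<^sub>R u + W t = t *\<^sub>R (u + U t)" using t by (simp add: U_def scaleR_add_right)
      have "0 = F (x0 + (t *\<^sub>R u + W t))" using W t by (simp add: add.assoc)
      also have "\<dots> = t^2 * F (u + U t)" by (simp add: Fshift tv Fscale v0)
      finally show "F (u + U t) = 0" using t by simp
    qed
    ultimately have "F (u + 0) = 0" by (rule lim_zero)
    then show ?thesis by (simp add: F_def)
  qed
  show ?thesis using Q cab by (auto simp: c_def a_def b_def)
qed


theorem lemma3p7:
  fixes A B C :: "real^'n^'n"
  assumes "symmetric_mat A" and "symmetric_mat B" and "symmetric_mat C"
    and "\<forall>z. Qf A z = 0 \<and> Qf B z = 0 \<longrightarrow> Qf C z = 0"
  shows "\<forall>x0\<in>calN A B.
     (\<exists>\<alpha> \<beta> :: real.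
        (\<forall>v\<in>Vsp A B x0. Qf C v = \<alpha> * Qf A v + \<beta> * Qf B v) \<and>
        C *v x0 = \<alpha> *\<^sub>R (A *v x0) + \<beta> *\<^sub>R (B *v x0)) \<and>
     (\<exists>U \<alpha> \<beta>. open U \<and> x0 \<in> U \<and> real_analytic_on \<alpha> U \<and> real_analytic_on \<beta> U \<and>
        (\<forall>x\<in>U \<inter> calN A B.
           (\<forall>v\<in>Vsp A B x. Qf C v = \<alpha> x * Qf A v + \<beta> x * Qf B v) \<and>
           C *v x = \<alpha> x *\<^sub>R (A *v x) + \<beta> x *\<^sub>R (B *v x)))"
proof
  fix x0 assume x0: "x0 \<in> calN A B"
  note pw = pointwise[OF assms]
  define gaa where "gaa x = (A *v x) \<bullet> (A *v x)" for x
  define gab where "gab x = (A *v x) \<bullet> (B *v x)" for x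
  define gbb where "gbb x = (B *v x) \<bullet> (B *v x)" for x
  define gca where "gca x = (C *v x) \<bullet> (A *v x)" for x
  define gcb where "gcb x = (C *v x) \<bullet> (B *v x)" for x
  define Df where "Df x = gaa x * gbb x - gab x * gab x" for x
  define af where "af x = (gbb x * gca x - gab x * gcb x) / Df x" for x
  define bf where "bf x = (gaa x * gcb x - gab x * gca x) / Df x" for x
  define U where "U = {x. 0 < Df x}"
  have contDf: "continuous_on UNIV Df"
    unfolding Df_def gaa_def gab_def gbb_def
    by (intro continuous_intros matrix_vector_mult_linear_continuous_on)
  have oU: "open U" unfolding U_def
    by (rule open_Collect_less) (use contDf in auto)
  have DfN: "0 < Df x" if "x \<in> calN A B" for x
  proof -
    have "wedge2 (A *v x) (B *v x) \<noteq> 0" using that by (simp add: calN_def)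
    from gram_pos[OF this] show ?thesis by (simp add: Df_def gaa_def gab_def gbb_def power2_eq_square)
  qed
  have x0U: "x0 \<in> U" using DfN[OF x0] by (simp add: U_def)
  have ANg: "AN gaa p" "AN gab p" "AN gbb p" "AN gca p" "AN gcb p" for p
    unfolding gaa_def gab_def gbb_def gca_def gcb_def by (rule AN_inner)+
  have anA: "real_analytic_on af U"
    unfolding af_def[abs_def]
    by (rule AN_real_analytic, intro AN_divide AN_diff AN_mult ANg)
       (auto simp: U_def Df_def intro!: AN_diff AN_mult ANg)
  have anB: "real_analytic_on bf U"
    unfolding bf_def[abs_def]
    by (rule AN_real_analytic, intro AN_divide AN_diff AN_mult ANg)
       (auto simp: U_def Df_def intro!: AN_diff AN_mult ANg)
  have cond: "(\<forall>v\<in>Vsp A B x. Qf C v = af x * Qf A v + bf x * Qf B v) \<and>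
           C *v x = af x *\<^sub>R (A *v x) + bf x *\<^sub>R (B *v x)" if x: "x \<in> calN A B" for x
  proof -
    obtain \<alpha> \<beta> where Q: "\<forall>v\<in>Vsp A B x. Qf C v = \<alpha> * Qf A v + \<beta> * Qf B v"
      and E: "C *v x = \<alpha> *\<^sub>R (A *v x) + \<beta> *\<^sub>R (B *v x)" using pw x by blast
    have D: "0 < Df x" by (rule DfN[OF x])
    have ca: "gca x = \<alpha> * gaa x + \<beta> * gab x"
      unfolding gca_def gaa_def gab_def E by (simp add: inner_add_left inner_commute[of "B *v x" "A *v x"])
    have cb: "gcb x = \<alpha> * gab x + \<beta> * gbb x"
      unfolding gcb_def gbb_def gab_def E by (simp add: inner_add_left)
    have "Df x * af x = gbb x * gca x - gab x * gcb x" using D by (simp add: af_def)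
    also have "\<dots> = Df x * \<alpha>" by (simp add: ca cb Df_def algebra_simps)
    finally have "Df x * af x = Df x * \<alpha>" .
    then have a: "af x = \<alpha>" using D by simp
    have "Df x * bf x = gaa x * gcb x - gab x * gca x" using D by (simp add: bf_def)
    also have "\<dots> = Df x * \<beta>" by (simp add: ca cb Df_def algebra_simps)
    finally have "Df x * bf x = Df x * \<beta>" .
    then have b: "bf x = \<beta>" using D by simp
    show ?thesis using Q E a b by simp
  qed
  show "(\<exists>\<alpha> \<beta> :: real.
        (\<forall>v\<in>Vsp A B x0. Qf C v = \<alpha> * Qf A v + \<beta> * Qf B v) \<and>
        C *v x0 = \<alpha> *\<^sub>R (A *v x0) + \<beta> *\<^sub>R (B *v x0)) \<and>
     (\<exists>U \<alpha> \<beta>. open U \<and> x0 \<in> U \<and> real_analytic_on \<alpha> U \<and> real_analytic_on \<beta> U \<and>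
        (\<forall>x\<in>U \<inter> calN A B.
           (\<forall>v\<in>Vsp A B x. Qf C v = \<alpha> x * Qf A v + \<beta> x * Qf B v) \<and>
           C *v x = \<alpha> x *\<^sub>R (A *v x) + \<beta> x *\<^sub>R (B *v x)))"
    using pw[OF x0] oU x0U anA anB cond by blast
qed

end
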